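(* Suppose $n\ge 2$ and $k\ge 4$, and let ${\bf a}_1,\ldots,{\bf a}_k$ be sequences of positive integers each with sum at most $n$. Then the multiple flag variety $M_{{\bf a}_1}\times\cdots\times M_{{\bf a}_k}$ has infinitely many orbits under the diagonal action of $G$.
   Context: $\mathbb F$ is an infinite field of characteristic $\ne 2$. Equip $\mathbb F^{2n}$ (canonical basis $e_1,\ldots,e_{2n}$) with the symmetric bilinear form $(e_i,e_j)=\delta_{i,2n+1-j}$, and let $G={\rm O}_{2n}(\mathbb F)$ be its isometry group in ${\rm GL}_{2n}(\mathbb F)$. A subspace $V$ is isotropic if $(V,V)=\{0\}$. For a sequence ${\bf a}=(\alpha_1,\ldots,\alpha_p)$ of positive integers with $\alpha_1+\cdots+\alpha_p\le n$, $M_{\bf a}$ is the set of flags $V_1\subset\cdots\subset V_p$ of subspaces of $\mathbb F^{2n}$ with $\dim V_j=\alpha_1+\cdots+\alpha_j$ and $V_p$ isotropic; $G$ acts on the product diagonally. *)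

theory Defs
  imports Complex_Main "HOL-Library.Function_Algebras"
begin

text \<open>Vectors of F^(2n) are modelled as functions nat => F vanishing outside {0..<2n};
  coordinate i (0-based) corresponds to e_(i+1).\<close>

definition vscale :: "'a::field \<Rightarrow> (nat \<Rightarrow> 'a) \<Rightarrow> (nat \<Rightarrow> 'a)" where
  "vscale c v = (\<lambda>i. c * v i)"

definition Fvec :: "nat \<Rightarrow> (nat \<Rightarrow> 'a::field) set" where
  "Fvec m = {v. \<forall>i\<ge>m. v i = 0}"

text \<open>The symmetric bilinear form (e_i,e_j) = delta_(i,2n+1-j), in 0-based indices.\<close>
definition bform :: "nat \<Rightarrow> (nat \<Rightarrow> 'a::field) \<Rightarrow> (nat \<Rightarrow> 'a) \<Rightarrow> 'a" where
  "bform n x y = (\<Sum>i<2*n. x i * y (2*n - 1 - i))"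

definition mat_act :: "nat \<Rightarrow> (nat \<Rightarrow> nat \<Rightarrow> 'a::field) \<Rightarrow> (nat \<Rightarrow> 'a) \<Rightarrow> (nat \<Rightarrow> 'a)" where
  "mat_act m g v = (\<lambda>i. if i < m then (\<Sum>j<m. g i j * v j) else 0)"

definition is_mat :: "nat \<Rightarrow> (nat \<Rightarrow> nat \<Rightarrow> 'a::field) \<Rightarrow> bool" where
  "is_mat m g \<longleftrightarrow> (\<forall>i j. (m \<le> i \<or> m \<le> j) \<longrightarrow> g i j = 0)"

definition mat_mult :: "nat \<Rightarrow> (nat \<Rightarrow> nat \<Rightarrow> 'a::field) \<Rightarrow> (nat \<Rightarrow> nat \<Rightarrow> 'a) \<Rightarrow> (nat \<Rightarrow> nat \<Rightarrow> 'a)" where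
  "mat_mult m g h = (\<lambda>i j. if i < m \<and> j < m then (\<Sum>l<m. g i l * h l j) else 0)"

definition mat_id :: "nat \<Rightarrow> (nat \<Rightarrow> nat \<Rightarrow> 'a::field)" where
  "mat_id m = (\<lambda>i j. if i < m \<and> i = j then 1 else 0)"

definition GL :: "nat \<Rightarrow> (nat \<Rightarrow> nat \<Rightarrow> 'a::field) set" where
  "GL m = {g. is_mat m g \<and> (\<exists>h. is_mat m h \<and> mat_mult m g h = mat_id m \<and> mat_mult m h g = mat_id m)}"

definition Ogroup :: "nat \<Rightarrow> (nat \<Rightarrow> nat \<Rightarrow> 'a::field) set" where
  "Ogroup n = {g \<in> GL (2*n). \<forall>x\<in>Fvec (2*n). \<forall>y\<in>Fvec (2*n).
       bform n (mat_act (2*n) g x) (mat_act (2*n) g y) = bform n x y}"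

definition is_subspace :: "nat \<Rightarrow> (nat \<Rightarrow> 'a::field) set \<Rightarrow> bool" where
  "is_subspace m V \<longleftrightarrow> module.subspace vscale V \<and> V \<subseteq> Fvec m"

definition sdim :: "(nat \<Rightarrow> 'a::field) set \<Rightarrow> nat" where
  "sdim V = vector_space.dim vscale V"

definition isotropic :: "nat \<Rightarrow> (nat \<Rightarrow> 'a::field) set \<Rightarrow> bool" where
  "isotropic n V \<longleftrightarrow> (\<forall>x\<in>V. \<forall>y\<in>V. bform n x y = 0)"

definition flag_var :: "nat \<Rightarrow> nat list \<Rightarrow> (nat \<Rightarrow> 'a::field) set list set" where
  "flag_var n a = {Vs. length Vs = length a
      \<and> (\<forall>j<length a. is_subspace (2*n) (Vs!j) \<and> sdim (Vs!j) = sum_list (take (Suc j) a))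
      \<and> (\<forall>j. Suc j < length a \<longrightarrow> Vs!j \<subseteq> Vs!(Suc j))
      \<and> isotropic n (last Vs)}"

definition multi_flag_var :: "nat \<Rightarrow> nat list list \<Rightarrow> (nat \<Rightarrow> 'a::field) set list list set" where
  "multi_flag_var n as = {X. length X = length as \<and> (\<forall>i<length as. X!i \<in> flag_var n (as!i))}"

definition act_multi :: "nat \<Rightarrow> (nat \<Rightarrow> nat \<Rightarrow> 'a::field) \<Rightarrow> (nat \<Rightarrow> 'a) set list list \<Rightarrow> (nat \<Rightarrow> 'a) set list list" where
  "act_multi n g X = map (map (\<lambda>V. mat_act (2*n) g ` V)) X"

definition orbit :: "nat \<Rightarrow> (nat \<Rightarrow> 'a::field) set list list \<Rightarrow> (nat \<Rightarrow> 'a) set list list set" where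
  "orbit n X = {act_multi n g X | g. g \<in> Ogroup n}"

end

theory Submission imports Defs begin

interpretation VS: vector_space "vscale :: 'a::field \<Rightarrow> (nat \<Rightarrow> 'a) \<Rightarrow> (nat \<Rightarrow> 'a)"
  by unfold_locales (auto simp: vscale_def fun_eq_iff algebra_simps)

lemma sdim_eq: "sdim V = VS.dim V" by (simp add: sdim_def)

lemma is_subspace_eq: "is_subspace m V \<longleftrightarrow> VS.subspace V \<and> V \<subseteq> Fvec m"
  by (simp add: is_subspace_def)

lemma coord_indep:
  fixes S :: "(nat \<Rightarrow> 'a::field) set"
  assumes "\<And>a. a \<in> S \<Longrightarrow> \<exists>c. a c \<noteq> 0 \<and> (\<forall>b\<in>S - {a}. b c = 0)"
  shows "\<not> VS.dependent S"
proof
  assume "VS.dependent S"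
  then obtain a where a: "a \<in> S" "a \<in> VS.span (S - {a})" by (auto simp: VS.dependent_def)
  obtain c where c: "a c \<noteq> 0" "\<forall>b\<in>S - {a}. b c = 0" using assms a(1) by blast
  have "VS.subspace {x. x c = 0}"
    by (auto simp: VS.subspace_def vscale_def)
  hence "VS.span (S - {a}) \<subseteq> {x. x c = 0}" using c(2) by (intro VS.span_minimal) auto
  thus False using a(2) c(1) by auto
qed

definition uvec :: "nat \<Rightarrow> 'a::field \<Rightarrow> nat \<Rightarrow> 'a" where
  "uvec n l = (\<lambda>i. if i = 0 then 1 else if i = 2*n-2 then l else 0)"
definition vvec :: "nat \<Rightarrow> 'a::field \<Rightarrow> nat \<Rightarrow> 'a" where
  "vvec n l = (\<lambda>i. if i = 1 then 1 else if i = 2*n-1 then -l else 0)"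
definition evec :: "nat \<Rightarrow> nat \<Rightarrow> 'a::field" where
  "evec j = (\<lambda>i. if i = j then 1 else 0)"

definition Lsp :: "nat \<Rightarrow> 'a::field \<Rightarrow> (nat \<Rightarrow> 'a) set" where
  "Lsp n l = {x. (\<forall>i\<ge>2*n. x i = 0) \<and> x (2*n-2) = l * x 0 \<and> x (2*n-1) = - l * x 1
     \<and> (\<forall>i. n \<le> i \<and> i < 2*n-2 \<longrightarrow> x i = 0)}"

lemma Lsp_subspace: "VS.subspace (Lsp n l)"
  by (auto simp: VS.subspace_def Lsp_def vscale_def algebra_simps)

lemma Lsp_Fvec: "Lsp n l \<subseteq> Fvec (2*n)"
  by (auto simp: Lsp_def Fvec_def)

lemma uvec_Lsp: "n \<ge> 2 \<Longrightarrow> uvec n l \<in> Lsp n l"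
  by (auto simp: Lsp_def uvec_def)
lemma vvec_Lsp: "n \<ge> 2 \<Longrightarrow> vvec n l \<in> Lsp n l"
  by (auto simp: Lsp_def vvec_def)
lemma evec_Lsp: "n \<ge> 2 \<Longrightarrow> 2 \<le> j \<Longrightarrow> j < n \<Longrightarrow> evec j \<in> Lsp n l"
  by (auto simp: Lsp_def evec_def)

lemma bform_Lsp:
  assumes n: "n \<ge> 2" and x: "x \<in> Lsp n l" and y: "y \<in> Lsp n m"
  shows "bform n x y = (l - m) * (x 0 * y 1 - x 1 * y 0)"
proof -
  let ?f = "\<lambda>i. x i * y (2*n - 1 - i)"
  have sub: "{0, 1, 2*n-2, 2*n-1} \<subseteq> {..<2*n}" using n by auto
  have z: "\<forall>i\<in>{..<2*n} - {0, 1, 2*n-2, 2*n-1}. ?f i = 0"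
  proof
    fix i assume i: "i \<in> {..<2*n} - {0, 1, 2*n-2, 2*n-1}"
    show "?f i = 0"
    proof (cases "i < n")
      case True
      hence "n \<le> 2*n-1-i \<and> 2*n-1-i < 2*n-2" using i by auto
      thus ?thesis using y by (auto simp: Lsp_def)
    next
      case False
      hence "n \<le> i \<and> i < 2*n-2" using i by auto
      thus ?thesis using x by (auto simp: Lsp_def)
    qed
  qed
  have "bform n x y = (\<Sum>i\<in>{0, 1, 2*n-2, 2*n-1}. ?f i)"
    unfolding bform_def by (rule sum.mono_neutral_right[OF _ sub z]) simp
  also have "\<dots> = ?f 0 + ?f 1 + ?f (2*n-2) + ?f (2*n-1)"
  proof -
    obtain m where m: "n = Suc (Suc m)" using n by (metis add_2_eq_Suc le_Suc_ex)
    show ?thesis unfolding m by (simp add: algebra_simps)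
  qed
  also have "\<dots> = x 0 * y (2*n-1) + x 1 * y (2*n-2) + x (2*n-2) * y 1 + x (2*n-1) * y 0"
    using n by (simp add: numeral_eq_Suc)
  also have "\<dots> = (l - m) * (x 0 * y 1 - x 1 * y 0)"
    using x y by (simp add: Lsp_def algebra_simps)
  finally show ?thesis .
qed

definition basisL :: "nat \<Rightarrow> 'a::field \<Rightarrow> bool \<Rightarrow> (nat \<Rightarrow> 'a) list" where
  "basisL n l b = (if b then [uvec n l, vvec n l] else [vvec n l, uvec n l]) @ map evec [2..<n]"

lemma length_basisL: "n \<ge> 2 \<Longrightarrow> length (basisL n l b) = n"
  by (simp add: basisL_def)

lemma set_basisL: "set (basisL n l b) = {uvec n l, vvec n l} \<union> evec ` {2..<n}"
  by (auto simp: basisL_def)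

lemma uv_ne: "n \<ge> 2 \<Longrightarrow> uvec n l \<noteq> vvec n l"
proof
  assume n: "n \<ge> 2" and e: "uvec n l = vvec n l"
  have "uvec n l 0 = vvec n l 0" using e by simp
  moreover have "uvec n l 0 = 1" "vvec n l 0 = 0" using n by (simp_all add: uvec_def vvec_def)
  ultimately show False by simp
qed
lemma ue_ne: "2 \<le> j \<Longrightarrow> uvec n l \<noteq> evec j"
proof
  assume j: "2 \<le> j" and e: "uvec n l = evec j"
  have "uvec n l 0 = evec j 0" using e by simp
  moreover have "uvec n l 0 = 1" "evec j 0 = (0::'a)" using j by (simp_all add: uvec_def evec_def)
  ultimately show False by simp
qed
lemma ve_ne: "2 \<le> j \<Longrightarrow> vvec n l \<noteq> evec j"
proof
  assume j: "2 \<le> j" and e: "vvec n l = evec j"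
  have "vvec n l 1 = evec j 1" using e by simp
  moreover have "vvec n l 1 = 1" "evec j 1 = (0::'a)" using j by (simp_all add: vvec_def evec_def)
  ultimately show False by simp
qed
lemma inj_evec: "inj (evec :: nat \<Rightarrow> nat \<Rightarrow> 'a::field)"
proof (rule injI)
  fix x y assume e: "(evec x :: nat \<Rightarrow> 'a) = evec y"
  have "evec x x = (evec y x :: 'a)" using e by simp
  thus "x = y" by (simp add: evec_def split: if_splits)
qed

lemma distinct_basisL: "n \<ge> 2 \<Longrightarrow> distinct (basisL n (l::'a::field) b)"
proof -
  assume that: "n \<ge> 2"
  have "distinct (map (evec :: nat \<Rightarrow> nat \<Rightarrow> 'a) [2..<n])"
    by (simp add: distinct_map inj_on_subset[OF inj_evec])
  moreover have "uvec n l \<notin> set (map evec [2..<n])"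
  proof
    assume "uvec n l \<in> set (map evec [2..<n])"
    then obtain x where "2 \<le> x" "uvec n l = evec x" by auto
    thus False using ue_ne by blast
  qed
  moreover have "vvec n l \<notin> set (map evec [2..<n])"
  proof
    assume "vvec n l \<in> set (map evec [2..<n])"
    then obtain x where "2 \<le> x" "vvec n l = evec x" by auto
    thus False using ve_ne by blast
  qed
  ultimately show ?thesis using uv_ne[OF that, of l] uv_ne[OF that, of l, symmetric]
    by (cases b) (simp_all add: basisL_def)
qed

lemma basisL_cases:
  assumes "x \<in> set (basisL n l b)"
    and "x = uvec n l \<Longrightarrow> P" "x = vvec n l \<Longrightarrow> P" "\<And>j. 2 \<le> j \<Longrightarrow> j < n \<Longrightarrow> x = evec j \<Longrightarrow> P"
  shows P
  using assms by (auto simp: set_basisL)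

lemma indep_basisL:
  assumes n: "n \<ge> 2"
  shows "\<not> VS.dependent (set (basisL n (l::'a::field) b))"
proof (rule coord_indep)
  fix a assume a: "a \<in> set (basisL n l b)"
  have d: "(1::nat) \<noteq> 2*n-2" "(0::nat) \<noteq> 2*n-2" "(0::nat) \<noteq> 2*n-1" "(1::nat) \<noteq> 2*n-1" using n by auto
  show "\<exists>c. a c \<noteq> 0 \<and> (\<forall>b\<in>set (basisL n l b) - {a}. b c = 0)"
    using a
  proof (rule basisL_cases)
    assume au: "a = uvec n l"
    have "\<forall>x\<in>set (basisL n l b) - {a}. x 0 = 0"
    proof (intro ballI, elim DiffE)
      fix x assume "x \<in> set (basisL n l b)" "x \<notin> {a}"
      thus "x 0 = 0" using d au
        by (elim basisL_cases) (simp_all add: vvec_def evec_def)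
    qed
    thus ?thesis using au by (intro exI[of _ 0]) (simp add: uvec_def)
  next
    assume av: "a = vvec n l"
    have "\<forall>x\<in>set (basisL n l b) - {a}. x 1 = 0"
    proof (intro ballI, elim DiffE)
      fix x assume "x \<in> set (basisL n l b)" "x \<notin> {a}"
      thus "x 1 = 0" using d av
        by (elim basisL_cases) (simp_all add: uvec_def evec_def)
    qed
    thus ?thesis using av by (intro exI[of _ 1]) (simp add: vvec_def)
  next
    fix j assume j: "2 \<le> j" "j < n" "a = evec j"
    have dj: "j \<noteq> 2*n-2" "j \<noteq> 2*n-1" "j \<noteq> 0" "j \<noteq> 1" using j n by auto
    have "\<forall>x\<in>set (basisL n l b) - {a}. x j = 0"
    proof (intro ballI, elim DiffE)
      fix x assume "x \<in> set (basisL n l b)" "x \<notin> {a}"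
      thus "x j = 0" using dj j
      proof (elim basisL_cases)
        fix i assume "x \<notin> {a}" "x = evec i" 
        hence "i \<noteq> j" using j by auto
        thus "x j = 0" using \<open>x = evec i\<close> by (simp add: evec_def)
      qed (simp_all add: uvec_def vvec_def)
    qed
    thus ?thesis using j by (intro exI[of _ j]) (simp add: evec_def)
  qed
qed

lemma basisL_Lsp: "n \<ge> 2 \<Longrightarrow> set (basisL n l b) \<subseteq> Lsp n l"
  using uvec_Lsp vvec_Lsp evec_Lsp by (auto simp: set_basisL)

definition mkflag :: "nat \<Rightarrow> 'a::field \<Rightarrow> bool \<Rightarrow> nat list \<Rightarrow> (nat \<Rightarrow> 'a) set list" where
  "mkflag n l b a = map (\<lambda>j. VS.span (set (take (sum_list (take (Suc j) a)) (basisL n l b)))) [0..<length a]"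

lemma sum_list_take_le: "sum_list (take k (a::nat list)) \<le> sum_list a"
proof -
  have "sum_list a = sum_list (take k a) + sum_list (drop k a)"
    by (metis append_take_drop_id sum_list_append)
  thus ?thesis by simp
qed

lemma sum_list_take_mono: "k \<le> k' \<Longrightarrow> sum_list (take k (a::nat list)) \<le> sum_list (take k' a)"
  by (metis min.absorb1 sum_list_take_le take_take)

lemma mkflag_span_Lsp: "n \<ge> 2 \<Longrightarrow> VS.span (set (take m (basisL n l b))) \<subseteq> Lsp n l"
  by (rule VS.span_minimal[OF _ Lsp_subspace]) (meson basisL_Lsp order_trans set_take_subset)

lemma mkflag_in:
  assumes n: "n \<ge> 2" and a: "a \<noteq> []" "sum_list a \<le> n"
  shows "mkflag n (l::'a::field) b a \<in> flag_var n a"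
proof -
  let ?B = "basisL n l b"
  let ?m = "\<lambda>j. sum_list (take (Suc j) a)"
  have comp: "is_subspace (2*n) (mkflag n l b a ! j) \<and> sdim (mkflag n l b a ! j) = ?m j"
    if j: "j < length a" for j
  proof -
    have m: "?m j \<le> n" using sum_list_take_le[of "Suc j" a] a by simp
    have ind: "\<not> VS.dependent (set (take (?m j) ?B))"
      by (rule VS.independent_mono[OF indep_basisL[OF n]]) (rule set_take_subset)
    have "card (set (take (?m j) ?B)) = length (take (?m j) ?B)"
      by (rule distinct_card[OF distinct_take[OF distinct_basisL[OF n]]])
    hence card: "card (set (take (?m j) ?B)) = ?m j"
      using m by (simp add: length_basisL[OF n])
    have F: "VS.span (set (take (?m j) ?B)) \<subseteq> Fvec (2*n)"
      using mkflag_span_Lsp[OF n] Lsp_Fvec by (rule order_trans)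
    have e: "mkflag n l b a ! j = VS.span (set (take (?m j) ?B))"
      using j by (simp add: mkflag_def)
    show ?thesis unfolding e is_subspace_def sdim_def
      using F VS.dim_span_eq_card_independent[OF ind] card by simp
  qed
  have chain: "mkflag n l b a ! j \<subseteq> mkflag n l b a ! Suc j" if "Suc j < length a" for j
    using that sum_list_take_mono[of "Suc j" "Suc (Suc j)" a]
    by (simp add: mkflag_def VS.span_mono set_take_subset_set_take)
  have all_L: "V \<subseteq> Lsp n l" if "V \<in> set (mkflag n l b a)" for V
    using that mkflag_span_Lsp[OF n] unfolding mkflag_def by auto
  have "last (mkflag n l b a) \<in> set (mkflag n l b a)"
    using a by (intro last_in_set) (simp add: mkflag_def)
  hence iso: "isotropic n (last (mkflag n l b a))"
    using all_L bform_Lsp[OF n, of _ l _ l] unfolding isotropic_def by (metis diff_self mult_zero_left subsetD)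
  have len: "length (mkflag n l b a) = length a" by (simp add: mkflag_def)
  show ?thesis using comp chain iso len unfolding flag_var_def by blast
qed


definition lamf :: "nat \<Rightarrow> 'a::field \<Rightarrow> 'a" where
  "lamf i s = (if i = 0 then 0 else if i = 1 then 1 else if i = 2 then -1 else if i = 3 then s else 0)"
definition bof :: "nat \<Rightarrow> bool" where
  "bof i = (i \<noteq> 1 \<and> i \<noteq> 2)"
definition config :: "nat \<Rightarrow> 'a::field \<Rightarrow> nat list list \<Rightarrow> (nat \<Rightarrow> 'a) set list list" where
  "config n s as = map (\<lambda>i. mkflag n (lamf i s) (bof i) (as!i)) [0..<length as]"
definition fvec :: "nat \<Rightarrow> 'a::field \<Rightarrow> nat \<Rightarrow> nat \<Rightarrow> 'a" where
  "fvec n s i = (if bof i then uvec n (lamf i s) else vvec n (lamf i s))"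

lemma config_in:
  assumes n: "n \<ge> 2" and as: "\<forall>a\<in>set as. a \<noteq> [] \<and> sum_list a \<le> n"
  shows "config n (s::'a::field) as \<in> multi_flag_var n as"
  unfolding multi_flag_var_def config_def
proof (intro CollectI conjI allI impI)
  fix i assume i: "i < length as"
  hence "as!i \<in> set as" by simp
  hence h: "as!i \<noteq> [] \<and> sum_list (as!i) \<le> n" using as by blast
  have "mkflag n (lamf i s) (bof i) (as ! i) \<in> flag_var n (as ! i)"
    using h mkflag_in[OF n] by blast
  thus "map (\<lambda>i. mkflag n (lamf i s) (bof i) (as ! i)) [0..<length as] ! i \<in> flag_var n (as ! i)"
    using i mkflag_in[OF n] by simp
qed simp

lemma config_comp0:
  assumes i: "i < length as" and a: "as!i \<noteq> []"
  shows "config n s as ! i ! 0 = VS.span (set (take (hd (as!i)) (basisL n (lamf i (s::'a::field)) (bof i))))"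
proof -
  have "sum_list (take (Suc 0) (as!i)) = hd (as!i)" using a by (cases "as!i") auto
  thus ?thesis using i a by (simp add: config_def mkflag_def)
qed

lemma fvec_in:
  assumes i: "i < length as" and a: "as!i \<noteq> []" "hd (as!i) > 0"
  shows "fvec n (s::'a::field) i \<in> config n s as ! i ! 0"
proof -
  have "fvec n s i \<in> set (take (hd (as!i)) (basisL n (lamf i s) (bof i)))"
    using a(2) by (cases "hd (as!i)") (auto simp: fvec_def basisL_def)
  thus ?thesis unfolding config_comp0[OF i a(1)] by (rule VS.span_base)
qed

lemma comp0_Lsp:
  assumes n: "n \<ge> 2" and i: "i < length as" and a: "as!i \<noteq> []"
  shows "config n (s::'a::field) as ! i ! 0 \<subseteq> Lsp n (lamf i s)"
  unfolding config_comp0[OF i a] by (rule mkflag_span_Lsp[OF n])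

lemma config_Fvec:
  assumes n: "n \<ge> 2"
  shows "\<forall>F\<in>set (config n (s::'a::field) as). \<forall>V\<in>set F. V \<subseteq> Fvec (2*n)"
  using mkflag_span_Lsp[OF n] Lsp_Fvec unfolding config_def mkflag_def by fastforce

lemma mat_act_id: "v \<in> Fvec m \<Longrightarrow> mat_act m (mat_id m) v = (v :: nat \<Rightarrow> 'a::field)"
  by (auto simp: mat_act_def mat_id_def Fvec_def fun_eq_iff if_distrib[of "\<lambda>x. x * _"] sum.delta cong: if_cong)

lemma mat_id_O: "n \<ge> 0 \<Longrightarrow> (mat_id (2*n) :: nat \<Rightarrow> nat \<Rightarrow> 'a::field) \<in> Ogroup n"
proof -
  have mm: "mat_mult m (mat_id m) (mat_id m) = (mat_id m :: nat \<Rightarrow> nat \<Rightarrow> 'a)" for m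
    by (auto simp: mat_mult_def mat_id_def fun_eq_iff if_distrib[of "\<lambda>x. x * _"] sum.delta cong: if_cong)
  have im: "is_mat m (mat_id m :: nat \<Rightarrow> nat \<Rightarrow> 'a)" for m by (auto simp: is_mat_def mat_id_def)
  show ?thesis using mm im
    unfolding Ogroup_def GL_def by (auto simp: mat_act_id)
qed

lemma act_id:
  assumes "\<forall>F\<in>set X. \<forall>V\<in>set F. V \<subseteq> Fvec (2*n)"
  shows "act_multi n (mat_id (2*n)) X = (X :: (nat \<Rightarrow> 'a::field) set list list)"
proof -
  have "map (\<lambda>V. mat_act (2*n) (mat_id (2*n)) ` V) F = F" if "F \<in> set X" for F
  proof (rule map_idI)
    fix V assume "V \<in> set F"
    hence "V \<subseteq> Fvec (2*n)" using assms that by blast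
    thus "mat_act (2*n) (mat_id (2*n)) ` V = V" using mat_act_id[where 'a='a] by (auto simp: image_def) (metis subsetD)+
  qed
  thus ?thesis unfolding act_multi_def by (rule map_idI)
qed

lemma key_algebra:
  fixes s t a0 a1 a2 a3 b0 b1 b2 b3 :: "'a::field"
  assumes two: "(2::'a) \<noteq> 0" and s: "s \<noteq> 0"
    and e01: "(0 - 1) * (a0 * b1 - b0 * a1) = (0 - 1) * (1 * 1 - 0 * 0)"
    and e02: "(0 - (-1)) * (a0 * b2 - b0 * a2) = (0 - (-1)) * (1 * 1 - 0 * 0)"
    and e23: "((-1) - s) * (a2 * b3 - b2 * a3) = ((-1) - t) * (0 * 0 - 1 * 1)"
    and e13: "(1 - s) * (a1 * b3 - b1 * a3) = (1 - t) * (0 * 0 - 1 * 1)"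
    and e03: "(0 - s) * (a0 * b3 - b0 * a3) = (0 - t) * (1 * 0 - 0 * 1)"
  shows "s = t"
proof -
  let ?D = "\<lambda>a b c d. a * d - b * c"
  have D01: "a0 * b1 - b0 * a1 = 1" using e01 by algebra
  have D02: "a0 * b2 - b0 * a2 = 1" using e02 by algebra
  have D03: "a0 * b3 - b0 * a3 = 0" using e03 s by simp
  have pl: "(a0 * b1 - b0 * a1) * (a2 * b3 - b2 * a3) - (a0 * b2 - b0 * a2) * (a1 * b3 - b1 * a3)
      + (a0 * b3 - b0 * a3) * (a1 * b2 - b1 * a2) = 0"
    by (simp add: algebra_simps)
  hence DD: "a2 * b3 - b2 * a3 = a1 * b3 - b1 * a3" using D01 D02 D03 by simp
  define D where "D = a1 * b3 - b1 * a3"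
  have E1: "((-1) - s) * D = 1 + t" using e23 DD D_def by simp
  have E2: "(1 - s) * D = t - 1" using e13 D_def by simp
  have "(1 - s) * (1 + t) = ((-1) - s) * (t - 1)"
    using E1 E2 by (metis mult.left_commute)
  hence "2 * t = 2 * s" by (simp add: algebra_simps)
  thus ?thesis using two by simp
qed

lemma uvec_01: "n \<ge> 2 \<Longrightarrow> uvec n l 0 = 1 \<and> uvec n l 1 = 0"
proof -
  assume "n \<ge> 2" hence "(1::nat) \<noteq> 2*n-2" by arith
  thus ?thesis by (simp add: uvec_def)
qed
lemma vvec_01: "n \<ge> 2 \<Longrightarrow> vvec n l 0 = 0 \<and> vvec n l 1 = 1"
  by (simp add: vvec_def)

lemma uvec_S0: "n \<ge> 2 \<Longrightarrow> uvec n l (Suc 0) = 0"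
  using uvec_01[of n l] by simp
lemma vvec_S0: "n \<ge> 2 \<Longrightarrow> vvec n l (Suc 0) = 1"
  using vvec_01[of n l] by simp

lemma main_inj:
  fixes s t :: "'a::field"
  assumes n: "n \<ge> 2" and len: "length as \<ge> 4"
    and as: "\<forall>a\<in>set as. a \<noteq> [] \<and> (\<forall>x\<in>set a. x > 0) \<and> sum_list a \<le> n"
    and two: "(2::'a) \<noteq> 0" and s: "s \<noteq> 0" and g: "g \<in> Ogroup n"
    and X: "config n s as = act_multi n g (config n t as)"
  shows "s = t"
proof -
  have ne: "as!i \<noteq> [] \<and> hd (as!i) > 0" if "i < length as" for i
    using as nth_mem[OF that] hd_in_set by blast
  define y where "y i = mat_act (2*n) g (fvec n t i)" for i
  have fL: "fvec n t i \<in> Lsp n (lamf i t)" for i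
    by (simp add: fvec_def uvec_Lsp[OF n] vvec_Lsp[OF n])
  have yL: "y i \<in> Lsp n (lamf i s)" if i: "i < 4" for i
  proof -
    have il: "i < length as" using i len by simp
    have "config n s as ! i ! 0 = act_multi n g (config n t as) ! i ! 0" using X by simp
    also have "\<dots> = mat_act (2*n) g ` (config n t as ! i ! 0)"
      using il ne[OF il] by (simp add: act_multi_def config_def mkflag_def)
    finally have c: "config n s as ! i ! 0 = mat_act (2*n) g ` (config n t as ! i ! 0)" .
    have "fvec n t i \<in> config n t as ! i ! 0"
      using fvec_in[OF il conjunct1[OF ne[OF il]] conjunct2[OF ne[OF il]]] .
    hence "y i \<in> config n s as ! i ! 0" unfolding c y_def by (rule imageI)
    thus ?thesis using comp0_Lsp[OF n il conjunct1[OF ne[OF il]]] by blast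
  qed
  have pres: "bform n (y i) (y j) = bform n (fvec n t i) (fvec n t j)" for i j
    using g fL Lsp_Fvec unfolding Ogroup_def y_def by blast
  have eq: "(lamf i s - lamf j s) * (y i 0 * y j 1 - y i 1 * y j 0)
      = (lamf i t - lamf j t) * (fvec n t i 0 * fvec n t j 1 - fvec n t i 1 * fvec n t j 0)"
    if "i < 4" "j < 4" for i j
    using pres[of i j] bform_Lsp[OF n yL[OF that(1)] yL[OF that(2)]] bform_Lsp[OF n fL fL] by simp
  note fv = uvec_01[OF n] vvec_01[OF n]
  show ?thesis
  proof (rule key_algebra[OF two s])
    show "(0 - 1) * (y 0 0 * y 1 1 - y 0 1 * y 1 0) = (0 - 1) * (1 * 1 - 0 * 0)"
      using eq[of 0 1] using n by (simp add: lamf_def fvec_def bof_def fv uvec_S0[OF n] vvec_S0[OF n])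
    show "(0 - (-1)) * (y 0 0 * y 2 1 - y 0 1 * y 2 0) = (0 - (-1)) * (1 * 1 - 0 * 0)"
      using eq[of 0 2] using n by (simp add: lamf_def fvec_def bof_def fv uvec_S0[OF n] vvec_S0[OF n])
    show "((-1) - s) * (y 2 0 * y 3 1 - y 2 1 * y 3 0) = ((-1) - t) * (0 * 0 - 1 * 1)"
      using eq[of 2 3] using n by (simp add: lamf_def fvec_def bof_def fv uvec_S0[OF n] vvec_S0[OF n])
    show "(1 - s) * (y 1 0 * y 3 1 - y 1 1 * y 3 0) = (1 - t) * (0 * 0 - 1 * 1)"
      using eq[of 1 3] using n by (simp add: lamf_def fvec_def bof_def fv uvec_S0[OF n] vvec_S0[OF n])
    show "(0 - s) * (y 0 0 * y 3 1 - y 0 1 * y 3 0) = (0 - t) * (1 * 0 - 0 * 1)"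
      using eq[of 0 3] using n by (simp add: lamf_def fvec_def bof_def fv uvec_S0[OF n] vvec_S0[OF n])
  qed
qed

theorem proposition1p2:
  fixes n k :: nat and as :: "nat list list"
  assumes "infinite (UNIV :: 'a::field set)"
    and "(2::'a) \<noteq> 0"
    and "n \<ge> 2" and "k \<ge> 4" and "length as = k"
    and "\<forall>a\<in>set as. a \<noteq> [] \<and> (\<forall>x\<in>set a. x > 0) \<and> sum_list a \<le> n"
  shows "infinite ((orbit n :: (nat \<Rightarrow> 'a) set list list \<Rightarrow> _) ` multi_flag_var n as)"
proof
  assume fin: "finite ((orbit n :: (nat \<Rightarrow> 'a) set list list \<Rightarrow> _) ` multi_flag_var n as)"
  let ?S = "UNIV - {0::'a}"
  let ?f = "\<lambda>s::'a. orbit n (config n s as)"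
  have infS: "infinite ?S" using assms(1) by (simp add: infinite_remove)
  have inj: "inj_on ?f ?S"
  proof (rule inj_onI)
    fix s t assume st: "s \<in> ?S" "t \<in> ?S" "?f s = ?f t"
    have "act_multi n (mat_id (2*n)) (config n s as) = config n s as"
      by (rule act_id[OF config_Fvec[OF assms(3)]])
    hence "config n s as \<in> orbit n (config n s as)"
      using mat_id_O[of n] unfolding orbit_def by force
    hence "config n s as \<in> orbit n (config n t as)" using st(3) by simp
    then obtain g where g: "g \<in> Ogroup n" "config n s as = act_multi n g (config n t as)"
      unfolding orbit_def by blast
    show "s = t"
      by (rule main_inj[OF assms(3) _ assms(6) assms(2) _ g]) (use st assms(4,5) in auto)
  qed
  have "?f ` ?S \<subseteq> (orbit n :: (nat \<Rightarrow> 'a) set list list \<Rightarrow> _) ` multi_flag_var n as"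
    using config_in[OF assms(3)] assms(6) by blast
  hence "finite (?f ` ?S)" using fin finite_subset by blast
  thus False using finite_imageD[OF _ inj] infS by blast
qed

end
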